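(* Let $\mathfrak{U}$ be a Banach algebra. Then $\mathfrak{U}$ is symmetrically pseudo-amenable if and only if there exists a net $\{\mathbf{t}_\lambda\}_{\lambda\in\Lambda}$ in $\mathfrak{U}\widehat{\otimes}\mathfrak{U}$ such that for all $a\in\mathfrak{U}$: (i) $a\mathbf{t}_\lambda-\mathbf{t}_\lambda a\to 0$; (ii) $\pi(\mathbf{t}_\lambda)a\to a$; (iii) $a\circ\mathbf{t}_\lambda-\mathbf{t}_\lambda\circ a\to 0$; (iv) $a\,\pi^{\circ}(\mathbf{t}_\lambda)\to a$.
   Context: For a Banach algebra $\mathfrak{U}$, $\mathfrak{U}\widehat{\otimes}\mathfrak{U}$ is the projective tensor product, with the operations (defined on elementary tensors and extended linearly and continuously) $a(b\otimes c)=ab\otimes c$, $(b\otimes c)a=b\otimes ca$, $a\circ(b\otimes c)=b\otimes ac$, $(b\otimes c)\circ a=ba\otimes c$, and the bounded linear maps $\pi,\pi^\circ:\mathfrak{U}\widehat{\otimes}\mathfrak{U}\to\mathfrak{U}$ given by $\pi(b\otimes c)=bc$, $\pi^{\circ}(b\otimes c)=cb$. The flip map is $(b\otimes c)^{\circ}=c\otimes b$; an element $\mathbf{t}$ is symmetric if $\mathbf{t}^\circ=\mathbf{t}$. An approximate diagonal for $\mathfrak{U}$ is a net $\{\mathbf{t}_\lambda\}$ in $\mathfrak{U}\widehat{\otimes}\mathfrak{U}$ (not necessarily bounded) with $a\mathbf{t}_\lambda-\mathbf{t}_\lambda a\to0$ and $\pi(\mathbf{t}_\lambda)a\to a$ for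 all $a\in\mathfrak{U}$. $\mathfrak{U}$ is called symmetrically pseudo-amenable if it has an approximate diagonal consisting of symmetric elements. *)

theory Defs
  imports "HOL-Analysis.Analysis"
begin

text \<open>Elements of the projective tensor product U \<otimes>^ U are represented by
  sequences (b_n, c_n) with \<Sum> norm b_n * norm c_n < \<infinity>, standing for
  \<Sum> b_n \<otimes> c_n.  Two representations denote the same element iff every
  bounded bilinear form takes the same value on them (the dual of U \<otimes>^ U is
  the space of bounded bilinear forms).\<close>

type_synonym 'a ptrep = "nat \<Rightarrow> 'a \<times> 'a"

definition pt_valid :: "('a::real_normed_vector) ptrep \<Rightarrow> bool" where
  "pt_valid f \<longleftrightarrow> summable (\<lambda>n. norm (fst (f n)) * norm (snd (f n)))"

definition pt_eval :: "('a \<Rightarrow> 'a \<Rightarrow> real) \<Rightarrow> 'a ptrep \<Rightarrow> real" where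
  "pt_eval \<phi> f = (\<Sum>n. \<phi> (fst (f n)) (snd (f n)))"

definition pt_equiv :: "('a::real_normed_vector) ptrep \<Rightarrow> 'a ptrep \<Rightarrow> bool" where
  "pt_equiv f g \<longleftrightarrow> (\<forall>\<phi>::'a \<Rightarrow> 'a \<Rightarrow> real. bounded_bilinear \<phi> \<longrightarrow> pt_eval \<phi> f = pt_eval \<phi> g)"

definition pt_norm :: "('a::real_normed_vector) ptrep \<Rightarrow> real" where
  "pt_norm f = Inf {(\<Sum>n. norm (fst (g n)) * norm (snd (g n))) | g. pt_valid g \<and> pt_equiv f g}"

definition pt_diff :: "('a::real_normed_vector) ptrep \<Rightarrow> 'a ptrep \<Rightarrow> 'a ptrep" where
  "pt_diff f g = (\<lambda>n. if even n then f (n div 2) else (- fst (g (n div 2)), snd (g (n div 2))))"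

text \<open>Module operations: a(b\<otimes>c)=ab\<otimes>c, (b\<otimes>c)a=b\<otimes>ca,
  a\<circ>(b\<otimes>c)=b\<otimes>ac, (b\<otimes>c)\<circ>a=ba\<otimes>c.\<close>
definition pt_lmul :: "'a::real_normed_algebra \<Rightarrow> 'a ptrep \<Rightarrow> 'a ptrep" where
  "pt_lmul a f = (\<lambda>n. (a * fst (f n), snd (f n)))"
definition pt_rmul :: "'a ptrep \<Rightarrow> 'a::real_normed_algebra \<Rightarrow> 'a ptrep" where
  "pt_rmul f a = (\<lambda>n. (fst (f n), snd (f n) * a))"
definition pt_lcirc :: "'a::real_normed_algebra \<Rightarrow> 'a ptrep \<Rightarrow> 'a ptrep" where
  "pt_lcirc a f = (\<lambda>n. (fst (f n), a * snd (f n)))"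
definition pt_rcirc :: "'a ptrep \<Rightarrow> 'a::real_normed_algebra \<Rightarrow> 'a ptrep" where
  "pt_rcirc f a = (\<lambda>n. (fst (f n) * a, snd (f n)))"

definition pt_pi :: "('a::real_normed_algebra) ptrep \<Rightarrow> 'a" where
  "pt_pi f = (\<Sum>n. fst (f n) * snd (f n))"
definition pt_pio :: "('a::real_normed_algebra) ptrep \<Rightarrow> 'a" where
  "pt_pio f = (\<Sum>n. snd (f n) * fst (f n))"

definition pt_flip :: "'a ptrep \<Rightarrow> 'a ptrep" where
  "pt_flip f = (\<lambda>n. (snd (f n), fst (f n)))"

definition pt_symmetric :: "('a::real_normed_vector) ptrep \<Rightarrow> bool" where
  "pt_symmetric f \<longleftrightarrow> pt_equiv (pt_flip f) f"

text \<open>Nets are rendered as nets along a proper filter F (the Isabelle idiom for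
  nets).  The index type is fixed to the representation type itself, which is
  universal: a net (t_\<lambda>) can be replaced by the image filter of its tail filter
  under \<lambda> \<mapsto> t_\<lambda>.\<close>
definition approx_diagonal :: "('a ptrep \<Rightarrow> ('a::real_normed_algebra) ptrep) \<Rightarrow> 'a ptrep filter \<Rightarrow> bool" where
  "approx_diagonal t F \<longleftrightarrow> F \<noteq> bot \<and> (\<forall>i. pt_valid (t i)) \<and>
     (\<forall>a. ((\<lambda>i. pt_norm (pt_diff (pt_lmul a (t i)) (pt_rmul (t i) a))) \<longlongrightarrow> 0) F) \<and>
     (\<forall>a. ((\<lambda>i. pt_pi (t i) * a) \<longlongrightarrow> a) F)"

definition symm_pseudo_amenable :: "'a::{real_normed_algebra,banach} itself \<Rightarrow> bool" where
  "symm_pseudo_amenable _ \<longleftrightarrow>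
     (\<exists>(t::'a ptrep \<Rightarrow> 'a ptrep) F. approx_diagonal t F \<and> (\<forall>i. pt_symmetric (t i)))"

end

theory Submission
  imports Defs
begin

definition lingraph :: "('a::real_normed_vector \<times> real) set \<Rightarrow> bool" where
 "lingraph G \<longleftrightarrow> (\<forall>x a b. (x,a)\<in>G \<longrightarrow> (x,b)\<in>G \<longrightarrow> a = b) \<and>
   (\<forall>x a y b. (x,a)\<in>G \<longrightarrow> (y,b)\<in>G \<longrightarrow> (x+y,a+b)\<in>G) \<and>
   (\<forall>x a c. (x,a)\<in>G \<longrightarrow> (c *\<^sub>R x, c*a)\<in>G) \<and>
   (\<forall>x a. (x,a)\<in>G \<longrightarrow> a \<le> norm x)"

lemma lingraphD:
  assumes "lingraph G"
  shows "\<And>x a b. (x,a)\<in>G \<Longrightarrow> (x,b)\<in>G \<Longrightarrow> a = b"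
    and "\<And>x a y b. (x,a)\<in>G \<Longrightarrow> (y,b)\<in>G \<Longrightarrow> (x+y,a+b)\<in>G"
    and "\<And>x a c. (x,a)\<in>G \<Longrightarrow> (c *\<^sub>R x, c*a)\<in>G"
    and "\<And>x a. (x,a)\<in>G \<Longrightarrow> a \<le> norm x"
  using assms unfolding lingraph_def by blast+

lemma hb_extend:
  fixes M :: "('a::real_normed_vector \<times> real) set"
  assumes lg: "lingraph M" and zM: "(z, norm z) \<in> M" and y: "y \<notin> fst ` M"
  shows "\<exists>M'. lingraph M' \<and> (z, norm z) \<in> M' \<and> M \<subseteq> M' \<and> M' \<noteq> M"
proof -
  have funM: "\<And>x a b. (x,a)\<in>M \<Longrightarrow> (x,b)\<in>M \<Longrightarrow> a = b"
   and add: "\<And>x a y b. (x,a)\<in>M \<Longrightarrow> (y,b)\<in>M \<Longrightarrow> (x+y,a+b)\<in>M"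
   and sc: "\<And>x a c. (x,a)\<in>M \<Longrightarrow> (c *\<^sub>R x, c*a)\<in>M"
   and bd: "\<And>x a. (x,a)\<in>M \<Longrightarrow> a \<le> norm x"
    using lg unfolding lingraph_def by blast+
  have z0: "(0,0) \<in> M" using sc[OF zM, of 0] by simp
  define S where "S = {a - norm (x - y) | x a. (x,a)\<in>M}"
  define c where "c = Sup S"
  have key: "a - norm (x - y) \<le> norm (w + y) - b" if "(x,a)\<in>M" "(w,b)\<in>M" for x a w b
  proof -
    have "a + b \<le> norm (x + w)" using bd[OF add[OF that]] .
    also have "\<dots> = norm ((x - y) + (w + y))" by (simp add: algebra_simps)
    also have "\<dots> \<le> norm (x - y) + norm (w + y)" by (rule norm_triangle_ineq)
    finally show ?thesis by simp
  qed
  have Sne: "S \<noteq> {}" using z0 unfolding S_def by blast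
  have Sbdd: "bdd_above S" unfolding S_def bdd_above_def using key[OF _ z0] by fastforce
  have c_up: "a - norm (x - y) \<le> c" if "(x,a)\<in>M" for x a
    unfolding c_def by (rule cSup_upper[OF _ Sbdd]) (use that S_def in blast)
  have c_low: "c \<le> norm (w + y) - b" if "(w,b)\<in>M" for w b
    unfolding c_def by (rule cSup_least[OF Sne]) (use key[OF _ that] S_def in blast)
  define M' where "M' = {(x + t *\<^sub>R y, a + t*c) | x a t. (x,a)\<in>M}"
  have uniq: "t = t' \<and> x = x'" if "(x,a)\<in>M" "(x',a')\<in>M" "x + t *\<^sub>R y = x' + t' *\<^sub>R y" for x a x' a' t t'
  proof (rule ccontr)
    assume nn: "\<not> (t = t' \<and> x = x')"
    have tt: "t \<noteq> t'" using nn that(3) by auto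
    have "(x + (-1) *\<^sub>R x', a + (-1) * a') \<in> M" using add[OF that(1) sc[OF that(2)]] .
    hence "((1/(t'-t)) *\<^sub>R (x + (-1) *\<^sub>R x'), (1/(t'-t)) * (a + (-1) * a')) \<in> M" by (rule sc)
    moreover have "(1/(t'-t)) *\<^sub>R (x + (-1) *\<^sub>R x') = y"
    proof -
      have "x - x' = (t' - t) *\<^sub>R y" using that(3) by (simp add: algebra_simps)
      thus ?thesis using tt by (simp add: scaleR_diff_left[symmetric])
    qed
    ultimately have "y \<in> fst ` M" by (metis fst_conv image_eqI)
    thus False using y by blast
  qed
  have "lingraph M'"
    unfolding lingraph_def
  proof (intro conjI allI impI)
    fix u p q assume "(u,p)\<in>M'" "(u,q)\<in>M'"
    then obtain x a t x' a' t' where h: "(x,a)\<in>M" "(x',a')\<in>M" "u = x + t *\<^sub>R y" "p = a + t*c"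
       "u = x' + t' *\<^sub>R y" "q = a' + t'*c" unfolding M'_def by blast
    have "x + t *\<^sub>R y = x' + t' *\<^sub>R y" using h by simp
    from uniq[OF h(1,2) this] have "t = t'" "x = x'" by auto
    with h funM show "p = q" by auto
  next
    fix u p v q assume "(u,p)\<in>M'" "(v,q)\<in>M'"
    then obtain x a t x' a' t' where h: "(x,a)\<in>M" "(x',a')\<in>M" "u = x + t *\<^sub>R y" "p = a + t*c"
       "v = x' + t' *\<^sub>R y" "q = a' + t'*c" unfolding M'_def by blast
    have "(x + x', a + a') \<in> M" using add h by blast
    moreover have "u + v = (x + x') + (t + t') *\<^sub>R y" "p + q = (a + a') + (t + t') * c"
      using h by (auto simp: algebra_simps)
    ultimately show "(u+v, p+q) \<in> M'" unfolding M'_def by blast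
  next
    fix u p d assume "(u,p)\<in>M'"
    then obtain x a t where h: "(x,a)\<in>M" "u = x + t *\<^sub>R y" "p = a + t*c"
      unfolding M'_def by blast
    have "(d *\<^sub>R x, d * a) \<in> M" using sc h by blast
    moreover have "d *\<^sub>R u = d *\<^sub>R x + (d * t) *\<^sub>R y" "d * p = d * a + (d * t) * c"
      using h by (auto simp: algebra_simps)
    ultimately show "(d *\<^sub>R u, d * p) \<in> M'" unfolding M'_def by blast
  next
    fix u p assume "(u,p)\<in>M'"
    then obtain x a t where h: "(x,a)\<in>M" "u = x + t *\<^sub>R y" "p = a + t*c"
      unfolding M'_def by blast
    consider "t > 0" | "t < 0" | "t = 0" by linarith
    thus "p \<le> norm u"
    proof cases
      case 1
      have "c \<le> norm ((1/t) *\<^sub>R x + y) - (1/t) * a" using c_low[OF sc[OF h(1)]] .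
      hence "t * c \<le> t * (norm ((1/t) *\<^sub>R x + y) - (1/t) * a)" using 1 by simp
      also have "\<dots> = norm (t *\<^sub>R ((1/t) *\<^sub>R x + y)) - a" using 1
        by (simp add: right_diff_distrib)
      also have "t *\<^sub>R ((1/t) *\<^sub>R x + y) = u" using 1 h by (simp add: scaleR_add_right)
      finally show ?thesis using h by simp
    next
      case 2
      define s where "s = - t"
      have s: "s > 0" using 2 s_def by simp
      have "(1/s) * a - norm ((1/s) *\<^sub>R x - y) \<le> c" using c_up[OF sc[OF h(1)]] .
      hence "s * ((1/s) * a - norm ((1/s) *\<^sub>R x - y)) \<le> s * c" using s by simp
      moreover have "s * ((1/s) * a - norm ((1/s) *\<^sub>R x - y)) = a - norm (s *\<^sub>R ((1/s) *\<^sub>R x - y))"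
        using s by (simp add: right_diff_distrib)
      moreover have "s *\<^sub>R ((1/s) *\<^sub>R x - y) = u" using s h s_def by (simp add: scaleR_diff_right)
      ultimately have "a - norm u \<le> s * c" by simp
      thus ?thesis using h unfolding s_def by simp
    next
      case 3 thus ?thesis using h bd by simp
    qed
  qed
  moreover have "(z, norm z) \<in> M'" unfolding M'_def using zM by force
  moreover have "M \<subseteq> M'" unfolding M'_def by force
  moreover have "(y, c) \<in> M'" unfolding M'_def using z0 by force
  hence "M' \<noteq> M" using y by force
  ultimately show ?thesis by blast
qed

lemma hahn_banach_sep:
  fixes z :: "'a::real_normed_vector"
  assumes "z \<noteq> 0"
  shows "\<exists>l::'a \<Rightarrow> real. bounded_linear l \<and> l z \<noteq> 0"
proof -
  define A where "A = {G :: ('a \<times> real) set. lingraph G \<and> (z, norm z) \<in> G}"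
  define G0 where "G0 = {(c *\<^sub>R z, c * norm z) | c. True}"
  have G0m: "(x,a) \<in> G0 \<longleftrightarrow> (\<exists>c. x = c *\<^sub>R z \<and> a = c * norm z)" for x a
    unfolding G0_def by auto
  have G0l: "lingraph G0"
    unfolding lingraph_def
  proof (intro conjI allI impI)
    fix x a b assume "(x, a) \<in> G0" "(x, b) \<in> G0"
    then obtain c d where "x = c *\<^sub>R z" "a = c * norm z" "x = d *\<^sub>R z" "b = d * norm z" unfolding G0m by blast
    hence "c *\<^sub>R z = d *\<^sub>R z" by auto
    hence "c = d" using assms by (simp add: scaleR_cancel_right)
    thus "a = b" using \<open>a = c * norm z\<close> \<open>b = d * norm z\<close> by simp
  next
    fix x a y b assume "(x, a) \<in> G0" "(y, b) \<in> G0"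
    then obtain c d where "x = c *\<^sub>R z" "a = c * norm z" "y = d *\<^sub>R z" "b = d * norm z" unfolding G0m by blast
    hence "x + y = (c+d) *\<^sub>R z \<and> a + b = (c+d) * norm z" by (simp add: algebra_simps)
    thus "(x + y, a + b) \<in> G0" unfolding G0m by blast
  next
    fix x a e assume "(x, a) \<in> G0"
    then obtain c where "x = c *\<^sub>R z" "a = c * norm z" unfolding G0m by blast
    hence "e *\<^sub>R x = (e*c) *\<^sub>R z \<and> e * a = (e*c) * norm z" by simp
    thus "(e *\<^sub>R x, e * a) \<in> G0" unfolding G0m by blast
  next
    fix x a assume "(x, a) \<in> G0"
    then obtain c where "x = c *\<^sub>R z" "a = c * norm z" unfolding G0m by blast
    moreover have "c * norm z \<le> \<bar>c\<bar> * norm z" by (rule mult_right_mono) simp_all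
    ultimately show "a \<le> norm x" by simp
  qed
  have "z = 1 *\<^sub>R z \<and> norm z = 1 * norm z" by simp
  hence "(z, norm z) \<in> G0" unfolding G0m by blast
  with G0l have G0A: "G0 \<in> A" unfolding A_def by blast
  have "\<forall>C\<in>chains A. \<exists>U\<in>A. \<forall>X\<in>C. X \<subseteq> U"
  proof
    fix C assume C: "C \<in> chains A"
    show "\<exists>U\<in>A. \<forall>X\<in>C. X \<subseteq> U"
    proof (cases "C = {}")
      case True thus ?thesis using G0A by blast
    next
      case False
      have CA: "C \<subseteq> A" using C by (rule chainsD2)
      have tot: "X \<subseteq> Y \<or> Y \<subseteq> X" if "X \<in> C" "Y \<in> C" for X Y using chainsD[OF C that] .
      have lgC: "lingraph X" if "X \<in> C" for X using CA that A_def by blast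
      have "lingraph (\<Union>C)"
        unfolding lingraph_def
      proof (intro conjI allI impI)
        fix x a b assume "(x,a) \<in> \<Union>C" "(x,b) \<in> \<Union>C"
        then obtain X Y where "X\<in>C" "Y\<in>C" "(x,a)\<in>X" "(x,b)\<in>Y" by blast
        thus "a = b" using tot[of X Y] lingraphD(1)[OF lgC[of X]] lingraphD(1)[OF lgC[of Y]] by blast
      next
        fix x a y b assume "(x,a) \<in> \<Union>C" "(y,b) \<in> \<Union>C"
        then obtain X Y where XY: "X\<in>C" "Y\<in>C" "(x,a)\<in>X" "(y,b)\<in>Y" by blast
        show "(x+y,a+b) \<in> \<Union>C"
        proof (cases "X \<subseteq> Y")
          case True thus ?thesis using XY lingraphD(2)[OF lgC[OF XY(2)]] by blast
        next
          case False hence "Y \<subseteq> X" using tot XY by blast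
          thus ?thesis using XY lingraphD(2)[OF lgC[OF XY(1)]] by blast
        qed
      next
        fix x a c assume "(x,a) \<in> \<Union>C"
        thus "(c *\<^sub>R x, c * a) \<in> \<Union>C" using lingraphD(3)[OF lgC] by blast
      next
        fix x a assume "(x,a) \<in> \<Union>C"
        thus "a \<le> norm x" using lingraphD(4)[OF lgC] by blast
      qed
      moreover have "(z, norm z) \<in> \<Union>C" using False CA A_def by blast
      ultimately show ?thesis unfolding A_def by blast
    qed
  qed
  then obtain M where MA: "M \<in> A" and Mmax: "\<forall>X\<in>A. M \<subseteq> X \<longrightarrow> X = M"
    using Zorn_Lemma2 by blast
  have lg: "lingraph M" and zM: "(z, norm z) \<in> M" using MA A_def by auto
  have funM: "\<And>x a b. (x,a)\<in>M \<Longrightarrow> (x,b)\<in>M \<Longrightarrow> a = b"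
   and add: "\<And>x a y b. (x,a)\<in>M \<Longrightarrow> (y,b)\<in>M \<Longrightarrow> (x+y,a+b)\<in>M"
   and sc: "\<And>x a c. (x,a)\<in>M \<Longrightarrow> (c *\<^sub>R x, c*a)\<in>M"
   and bd: "\<And>x a. (x,a)\<in>M \<Longrightarrow> a \<le> norm x"
    using lg unfolding lingraph_def by blast+
  have total: "\<exists>a. (x,a) \<in> M" for x
  proof (rule ccontr)
    assume "\<nexists>a. (x, a) \<in> M"
    hence "x \<notin> fst ` M" by force
    from hb_extend[OF lg zM this] obtain M' where "lingraph M'" "(z, norm z) \<in> M'" "M \<subseteq> M'" "M' \<noteq> M"
      by blast
    thus False using Mmax A_def by blast
  qed
  define l where "l x = (THE a. (x,a) \<in> M)" for x
  have lM: "(x, l x) \<in> M" for x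
    unfolding l_def using total[of x] funM by (metis theI)
  have lu: "l x = a" if "(x,a) \<in> M" for x a using funM[OF lM that] .
  have "bounded_linear l"
  proof (rule bounded_linear_intro[where K=1])
    fix x y show "l (x + y) = l x + l y" using lu[OF add[OF lM lM]] .
  next
    fix r x show "l (r *\<^sub>R x) = r *\<^sub>R l x" using lu[OF sc[OF lM]] by simp
  next
    fix x
    have "l x \<le> norm x" using bd[OF lM] .
    moreover have "l (-x) = - l x" using lu[OF sc[OF lM[of x], where c="-1"]] by simp
    moreover have "l (-x) \<le> norm x" using bd[OF lM, of "-x"] by simp
    ultimately show "norm (l x) \<le> norm x * 1" by simp
  qed
  moreover have "l z \<noteq> 0" using lu[OF zM] assms by simp
  ultimately show ?thesis by (intro exI[of _ l] conjI)
qed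


definition pt_add :: "'a ptrep \<Rightarrow> 'a ptrep \<Rightarrow> 'a ptrep" where
  "pt_add f g = (\<lambda>n. if even n then f (n div 2) else g (n div 2))"
definition pt_neg :: "('a::real_normed_vector) ptrep \<Rightarrow> 'a ptrep" where
  "pt_neg g = (\<lambda>n. (- fst (g n), snd (g n)))"
definition pt_scale :: "real \<Rightarrow> ('a::real_normed_vector) ptrep \<Rightarrow> 'a ptrep" where
  "pt_scale c f = (\<lambda>n. (c *\<^sub>R fst (f n), snd (f n)))"
definition PB :: "('a \<Rightarrow> 'a \<Rightarrow> 'b::real_normed_vector) \<Rightarrow> 'a ptrep \<Rightarrow> 'b" where
  "PB B f = (\<Sum>n. B (fst (f n)) (snd (f n)))"

lemma pt_diff_eq: "pt_diff f g = pt_add f (pt_neg g)"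
  by (auto simp: pt_diff_def pt_add_def pt_neg_def)

lemma sums_interleave:
  fixes u v :: "nat \<Rightarrow> 'b::real_normed_vector"
  assumes "u sums U" "v sums V"
  shows "(\<lambda>n. if even n then u (n div 2) else v (n div 2)) sums (U + V)"
proof -
  define u' where "u' n = (if even n then u (n div 2) else 0)" for n
  define v' where "v' n = (if even n then 0 else v (n div 2))" for n
  have "(\<lambda>n. u' (2*n)) sums U" using assms(1) by (simp add: u'_def)
  moreover have "strict_mono (\<lambda>n::nat. 2*n)" by (auto simp: strict_mono_def)
  moreover have "u' n = 0" if "n \<notin> range (\<lambda>n::nat. 2*n)" for n
  proof -
    have "odd n" using that by (metis evenE rangeI)
    thus ?thesis by (simp add: u'_def)
  qed
  ultimately have 1: "u' sums U" using sums_mono_reindex by blast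
  have "(\<lambda>n. v' (2*n+1)) sums V" using assms(2) by (simp add: v'_def)
  moreover have "strict_mono (\<lambda>n::nat. 2*n+1)" by (auto simp: strict_mono_def)
  moreover have "v' n = 0" if "n \<notin> range (\<lambda>n::nat. 2*n+1)" for n
  proof -
    have "even n" using that by (metis oddE rangeI)
    thus ?thesis by (simp add: v'_def)
  qed
  ultimately have 2: "v' sums V" using sums_mono_reindex by blast
  have "(\<lambda>n. u' n + v' n) sums (U + V)" by (rule sums_add[OF 1 2])
  moreover have "(\<lambda>n. u' n + v' n) = (\<lambda>n. if even n then u (n div 2) else v (n div 2))"
    by (auto simp: u'_def v'_def)
  ultimately show ?thesis by simp
qed

lemma add_sums:
  fixes h :: "'a \<times> 'a \<Rightarrow> 'b::real_normed_vector"
  assumes "summable (\<lambda>n. h (f n))" "summable (\<lambda>n. h (g n))"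
  shows "(\<lambda>n. h (pt_add f g n)) sums ((\<Sum>n. h (f n)) + (\<Sum>n. h (g n)))"
proof -
  have "(\<lambda>n. h (pt_add f g n)) = (\<lambda>n. if even n then h (f (n div 2)) else h (g (n div 2)))"
    by (auto simp: pt_add_def)
  thus ?thesis using sums_interleave[OF summable_sums[OF assms(1)] summable_sums[OF assms(2)]] by simp
qed

lemma bb_summable:
  fixes B :: "'a::real_normed_vector \<Rightarrow> 'a \<Rightarrow> 'b::banach"
  assumes "bounded_bilinear B" "pt_valid f"
  shows "summable (\<lambda>n. B (fst (f n)) (snd (f n)))"
proof -
  obtain K where K: "\<And>x y. norm (B x y) \<le> norm x * norm y * K"
    using bounded_bilinear.bounded[OF assms(1)] by blast
  have "summable (\<lambda>n. norm (fst (f n)) * norm (snd (f n)) * K)"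
    using assms(2) unfolding pt_valid_def by (rule summable_mult2)
  moreover have "\<exists>N. \<forall>n\<ge>N. norm (B (fst (f n)) (snd (f n))) \<le> norm (fst (f n)) * norm (snd (f n)) * K"
    using K by blast
  ultimately show ?thesis by (rule summable_comparison_test[rotated])
qed

lemma valid_add: "pt_valid f \<Longrightarrow> pt_valid g \<Longrightarrow> pt_valid (pt_add f g)"
  unfolding pt_valid_def
  using sums_summable[OF add_sums[of "\<lambda>p. norm (fst p) * norm (snd p)" f g]] by simp

lemma valid_neg: "pt_valid f \<Longrightarrow> pt_valid (pt_neg f)"
  unfolding pt_valid_def pt_neg_def by simp

lemma valid_flip: "pt_valid f \<Longrightarrow> pt_valid (pt_flip f)"
  unfolding pt_valid_def pt_flip_def by (simp add: mult.commute)

lemma valid_scale: "pt_valid f \<Longrightarrow> pt_valid (pt_scale c f)"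
  unfolding pt_valid_def pt_scale_def using summable_mult[of _ "\<bar>c\<bar>"] by (simp add: mult.assoc)

lemma valid_lmul: "pt_valid f \<Longrightarrow> pt_valid (pt_lmul a f)"
  unfolding pt_valid_def pt_lmul_def
proof -
  assume "summable (\<lambda>n. norm (fst (f n)) * norm (snd (f n)))"
  hence sg: "summable (\<lambda>n. norm a * (norm (fst (f n)) * norm (snd (f n))))" by (rule summable_mult)
  have "norm (a * fst (f n)) * norm (snd (f n)) \<le> norm a * (norm (fst (f n)) * norm (snd (f n)))" for n
    by (auto simp: mult.assoc[symmetric] intro!: mult_right_mono norm_mult_ineq)
  hence exN: "\<exists>N. \<forall>n\<ge>N. norm (norm (a * fst (f n)) * norm (snd (f n))) \<le> norm a * (norm (fst (f n)) * norm (snd (f n)))"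
    by simp
  show "summable (\<lambda>n. norm (fst (a * fst (f n), snd (f n))) * norm (snd (a * fst (f n), snd (f n))))"
    using summable_comparison_test[OF exN sg] by simp
qed

lemma valid_rmul: "pt_valid f \<Longrightarrow> pt_valid (pt_rmul f a)"
  unfolding pt_valid_def pt_rmul_def
proof -
  assume "summable (\<lambda>n. norm (fst (f n)) * norm (snd (f n)))"
  hence sg: "summable (\<lambda>n. norm a * (norm (fst (f n)) * norm (snd (f n))))" by (rule summable_mult)
  have "norm (fst (f n)) * norm (snd (f n) * a) \<le> norm a * (norm (fst (f n)) * norm (snd (f n)))" for n
  proof -
    have "norm (snd (f n) * a) \<le> norm (snd (f n)) * norm a" by (rule norm_mult_ineq)
    hence "norm (fst (f n)) * norm (snd (f n) * a) \<le> norm (fst (f n)) * (norm (snd (f n)) * norm a)"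
      by (rule mult_left_mono) simp
    thus ?thesis by (simp add: ac_simps)
  qed
  hence exN: "\<exists>N. \<forall>n\<ge>N. norm (norm (fst (f n)) * norm (snd (f n) * a)) \<le> norm a * (norm (fst (f n)) * norm (snd (f n)))"
    by simp
  show "summable (\<lambda>n. norm (fst (fst (f n), snd (f n) * a)) * norm (snd (fst (f n), snd (f n) * a)))"
    using summable_comparison_test[OF exN sg] by simp
qed

lemma lcirc_flip: "pt_lcirc a f = pt_flip (pt_lmul a (pt_flip f))"
  by (simp add: pt_lcirc_def pt_flip_def pt_lmul_def)
lemma rcirc_flip: "pt_rcirc f a = pt_flip (pt_rmul (pt_flip f) a)"
  by (simp add: pt_rcirc_def pt_flip_def pt_rmul_def)
lemma flip_flip[simp]: "pt_flip (pt_flip f) = f"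
  by (simp add: pt_flip_def)
lemma valid_lcirc: "pt_valid f \<Longrightarrow> pt_valid (pt_lcirc a f)"
  by (simp add: lcirc_flip valid_flip valid_lmul)
lemma valid_rcirc: "pt_valid f \<Longrightarrow> pt_valid (pt_rcirc f a)"
  by (simp add: rcirc_flip valid_flip valid_rmul)
lemma valid_diff: "pt_valid f \<Longrightarrow> pt_valid g \<Longrightarrow> pt_valid (pt_diff f g)"
  by (simp add: pt_diff_eq valid_add valid_neg)

lemma equiv_refl: "pt_equiv f f" by (simp add: pt_equiv_def)
lemma equiv_sym: "pt_equiv f g \<Longrightarrow> pt_equiv g f" by (simp add: pt_equiv_def)
lemma equiv_trans: "pt_equiv f g \<Longrightarrow> pt_equiv g h \<Longrightarrow> pt_equiv f h" by (simp add: pt_equiv_def)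

lemma equiv_map:
  fixes p q :: "'a::real_normed_vector \<Rightarrow> 'a"
  assumes bb: "\<And>\<phi>::'a\<Rightarrow>'a\<Rightarrow>real. bounded_bilinear \<phi> \<Longrightarrow> bounded_bilinear (\<lambda>x y. \<phi> (p x) (q y))"
    and e: "pt_equiv f g"
  shows "pt_equiv (\<lambda>n. (p (fst (f n)), q (snd (f n)))) (\<lambda>n. (p (fst (g n)), q (snd (g n))))"
  unfolding pt_equiv_def
proof (intro allI impI)
  fix \<phi> :: "'a\<Rightarrow>'a\<Rightarrow>real" assume "bounded_bilinear \<phi>"
  from e[unfolded pt_equiv_def, rule_format, OF bb[OF this]]
  show "pt_eval \<phi> (\<lambda>n. (p (fst (f n)), q (snd (f n)))) = pt_eval \<phi> (\<lambda>n. (p (fst (g n)), q (snd (g n))))"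
    by (simp add: pt_eval_def)
qed

lemma equiv_lmul: "pt_equiv f g \<Longrightarrow> pt_equiv (pt_lmul a f) (pt_lmul a g)"
  unfolding pt_lmul_def
  using equiv_map[of "\<lambda>x. a * x" "\<lambda>y. y" f g]
    bounded_bilinear.comp[OF _ bounded_linear_mult_right bounded_linear_ident] by blast

lemma equiv_rmul: "pt_equiv f g \<Longrightarrow> pt_equiv (pt_rmul f a) (pt_rmul g a)"
  unfolding pt_rmul_def
  using equiv_map[of "\<lambda>x. x" "\<lambda>y. y * a" f g]
    bounded_bilinear.comp[OF _ bounded_linear_ident bounded_linear_mult_left] by blast

lemma equiv_neg: "pt_equiv f g \<Longrightarrow> pt_equiv (pt_neg f) (pt_neg g)"
  unfolding pt_neg_def
  using equiv_map[of "\<lambda>x. - x" "\<lambda>y. y" f g]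
    bounded_bilinear.comp[OF _ bounded_linear_minus[OF bounded_linear_ident] bounded_linear_ident] by blast

lemma equiv_scale: "pt_equiv f g \<Longrightarrow> pt_equiv (pt_scale c f) (pt_scale c g)"
  unfolding pt_scale_def
  using equiv_map[of "\<lambda>x. c *\<^sub>R x" "\<lambda>y. y" f g]
    bounded_bilinear.comp[OF _ bounded_linear_scaleR_right bounded_linear_ident] by blast

lemma equiv_flip: "pt_equiv f g \<Longrightarrow> pt_equiv (pt_flip f) (pt_flip g)"
  unfolding pt_equiv_def
proof (intro allI impI)
  fix \<phi> :: "'a\<Rightarrow>'a\<Rightarrow>real" assume e: "\<forall>\<phi>. bounded_bilinear \<phi> \<longrightarrow> pt_eval \<phi> f = pt_eval \<phi> g"
    and "bounded_bilinear \<phi>"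
  from e[rule_format, OF bounded_bilinear.flip[OF this(2)]]
  show "pt_eval \<phi> (pt_flip f) = pt_eval \<phi> (pt_flip g)"
    by (simp add: pt_eval_def pt_flip_def)
qed

lemma equiv_termwise:
  fixes f g :: "('a::real_normed_vector) ptrep"
  assumes "\<And>n. g n = f n \<or> g n = (- fst (f n), - snd (f n))"
  shows "pt_equiv f g"
  unfolding pt_equiv_def
proof (intro allI impI)
  fix \<phi> :: "'a\<Rightarrow>'a\<Rightarrow>real" assume bb: "bounded_bilinear \<phi>"
  have "\<phi> (fst (g n)) (snd (g n)) = \<phi> (fst (f n)) (snd (f n))" for n
    using assms[of n] bounded_bilinear.minus_left[OF bb] bounded_bilinear.minus_right[OF bb] by auto
  thus "pt_eval \<phi> f = pt_eval \<phi> g" by (simp add: pt_eval_def)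
qed

lemma eval_add:
  fixes f g :: "('a::real_normed_vector) ptrep"
  assumes "bounded_bilinear \<phi>" "pt_valid f" "pt_valid g"
  shows "pt_eval \<phi> (pt_add f g) = pt_eval \<phi> f + pt_eval \<phi> g"
  using sums_unique[OF add_sums[of "\<lambda>p. \<phi> (fst p) (snd p)" f g,
     OF bb_summable[OF assms(1,2)] bb_summable[OF assms(1,3)]]]
  by (simp add: pt_eval_def)

lemma equiv_add:
  assumes "pt_valid f" "pt_valid f'" "pt_valid g" "pt_valid g'" "pt_equiv f f'" "pt_equiv g g'"
  shows "pt_equiv (pt_add f g) (pt_add f' g')"
  using assms unfolding pt_equiv_def by (simp add: eval_add)

lemma equiv_add_comm:
  assumes "pt_valid f" "pt_valid g"
  shows "pt_equiv (pt_add f g) (pt_add g f)"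
  using assms unfolding pt_equiv_def by (simp add: eval_add)

lemma equiv_add4:
  assumes "pt_valid A" "pt_valid B" "pt_valid C" "pt_valid D"
  shows "pt_equiv (pt_add (pt_add A B) (pt_add C D)) (pt_add (pt_add A C) (pt_add B D))"
  using assms unfolding pt_equiv_def by (simp add: eval_add valid_add)

definition nsum :: "('a::real_normed_vector) ptrep \<Rightarrow> real" where
  "nsum g = (\<Sum>n. norm (fst (g n)) * norm (snd (g n)))"

lemma pt_norm_alt: "pt_norm f = Inf {nsum g | g. pt_valid g \<and> pt_equiv f g}"
  by (simp add: pt_norm_def nsum_def)

lemma N_equiv: "pt_equiv f g \<Longrightarrow> pt_norm f = pt_norm g"
proof -
  assume e: "pt_equiv f g"
  have "\<And>h. pt_equiv f h = pt_equiv g h" using equiv_sym equiv_trans e by blast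
  thus ?thesis by (simp add: pt_norm_def)
qed

lemma nsum_nonneg: "pt_valid g \<Longrightarrow> 0 \<le> nsum g"
  unfolding nsum_def pt_valid_def by (rule suminf_nonneg) auto

lemma N_le: "pt_valid f \<Longrightarrow> pt_norm f \<le> nsum f"
  unfolding pt_norm_alt
proof (rule cInf_lower)
  assume "pt_valid f"
  thus "nsum f \<in> {nsum g |g. pt_valid g \<and> pt_equiv f g}" using equiv_refl by blast
  show "bdd_below {nsum g |g. pt_valid g \<and> pt_equiv f g}"
    by (rule bdd_belowI[of _ 0]) (auto simp: nsum_nonneg)
qed

lemma N_lower_bound:
  assumes "pt_valid f" "\<And>g. pt_valid g \<Longrightarrow> pt_equiv f g \<Longrightarrow> z \<le> nsum g"
  shows "z \<le> pt_norm f"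
  unfolding pt_norm_alt
proof (rule cInf_greatest)
  show "{nsum g |g. pt_valid g \<and> pt_equiv f g} \<noteq> {}" using assms(1) equiv_refl by blast
  show "\<And>x. x \<in> {nsum g |g. pt_valid g \<and> pt_equiv f g} \<Longrightarrow> z \<le> x" using assms(2) by blast
qed

lemma N_nonneg: "pt_valid f \<Longrightarrow> 0 \<le> pt_norm f"
  by (rule N_lower_bound) (auto simp: nsum_nonneg)

lemma nsum_flip: "nsum (pt_flip g) = nsum g"
  by (simp add: nsum_def pt_flip_def mult.commute)

lemma N_flip: "pt_norm (pt_flip f) = pt_norm f"
proof -
  have "{nsum g |g. pt_valid g \<and> pt_equiv (pt_flip f) g} = {nsum g |g. pt_valid g \<and> pt_equiv f g}"
  proof (intro set_eqI iffI)
    fix x assume "x \<in> {nsum g |g. pt_valid g \<and> pt_equiv (pt_flip f) g}"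
    then obtain g where g: "x = nsum g" "pt_valid g" "pt_equiv (pt_flip f) g" by blast
    have "pt_equiv f (pt_flip g)" using equiv_flip[OF g(3)] by simp
    moreover have "x = nsum (pt_flip g)" using g(1) by (simp add: nsum_def pt_flip_def mult.commute)
    ultimately show "x \<in> {nsum g |g. pt_valid g \<and> pt_equiv f g}" using valid_flip[OF g(2)] by blast
  next
    fix x assume "x \<in> {nsum g |g. pt_valid g \<and> pt_equiv f g}"
    then obtain g where g: "x = nsum g" "pt_valid g" "pt_equiv f g" by blast
    have "pt_equiv (pt_flip f) (pt_flip g)" using equiv_flip[OF g(3)] by simp
    moreover have "x = nsum (pt_flip g)" using g(1) by (simp add: nsum_def pt_flip_def mult.commute)
    ultimately show "x \<in> {nsum g |g. pt_valid g \<and> pt_equiv (pt_flip f) g}" using valid_flip[OF g(2)] by blast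
  qed
  thus ?thesis by (simp add: pt_norm_alt)
qed

lemma nsum_add: "pt_valid f \<Longrightarrow> pt_valid g \<Longrightarrow> nsum (pt_add f g) = nsum f + nsum g"
  unfolding nsum_def pt_valid_def
  using sums_unique[OF add_sums[of "\<lambda>p. norm (fst p) * norm (snd p)" f g]] by simp

lemma N_add:
  assumes f: "pt_valid f" and g: "pt_valid g"
  shows "pt_norm (pt_add f g) \<le> pt_norm f + pt_norm g"
proof -
  have main: "pt_norm (pt_add f g) \<le> nsum f' + nsum g'"
    if "pt_valid f'" "pt_equiv f f'" "pt_valid g'" "pt_equiv g g'" for f' g'
  proof -
    have "pt_norm (pt_add f g) = pt_norm (pt_add f' g')"
      by (rule N_equiv, rule equiv_add) (use f g that in auto)
    also have "\<dots> \<le> nsum (pt_add f' g')" by (rule N_le, rule valid_add) (use that in auto)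
    also have "\<dots> = nsum f' + nsum g'" using nsum_add that by auto
    finally show ?thesis .
  qed
  have "pt_norm (pt_add f g) - nsum g' \<le> pt_norm f" if "pt_valid g'" "pt_equiv g g'" for g'
    by (rule N_lower_bound[OF f]) (use main that in force)
  hence "pt_norm (pt_add f g) - pt_norm f \<le> pt_norm g"
    by (intro N_lower_bound[OF g]) force
  thus ?thesis by simp
qed

lemma nsum_scale: "pt_valid f \<Longrightarrow> c \<ge> 0 \<Longrightarrow> nsum (pt_scale c f) = c * nsum f"
  unfolding nsum_def pt_valid_def pt_scale_def
  by (simp add: suminf_mult mult.assoc)

lemma N_scale:
  assumes f: "pt_valid f" and c: "c > 0"
  shows "pt_norm (pt_scale c f) \<le> c * pt_norm f"
proof -
  have "pt_norm (pt_scale c f) / c \<le> pt_norm f"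
  proof (rule N_lower_bound[OF f])
    fix g assume g: "pt_valid g" "pt_equiv f g"
    have "pt_norm (pt_scale c f) = pt_norm (pt_scale c g)" by (rule N_equiv, rule equiv_scale, rule g(2))
    also have "\<dots> \<le> nsum (pt_scale c g)" by (rule N_le, rule valid_scale, rule g(1))
    also have "\<dots> = c * nsum g" using nsum_scale[OF g(1), of c] c by simp
    finally show "pt_norm (pt_scale c f) / c \<le> nsum g" using c by (simp add: divide_simps mult.commute)
  qed
  thus ?thesis using c by (simp add: divide_simps mult.commute)
qed

lemma bb_compose:
  assumes l: "bounded_linear l" and B: "bounded_bilinear B"
  shows "bounded_bilinear (\<lambda>x y. l (B x y))"
proof -
  interpret l: bounded_linear l by fact
  interpret B: bounded_bilinear B by fact
  show ?thesis
  proof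
    show "\<And>a a' b. l (B (a + a') b) = l (B a b) + l (B a' b)" by (simp add: B.add_left l.add)
    show "\<And>a b b'. l (B a (b + b')) = l (B a b) + l (B a b')" by (simp add: B.add_right l.add)
    show "\<And>r a b. l (B (r *\<^sub>R a) b) = r *\<^sub>R l (B a b)" by (simp add: B.scaleR_left l.scaleR)
    show "\<And>a r b. l (B a (r *\<^sub>R b)) = r *\<^sub>R l (B a b)" by (simp add: B.scaleR_right l.scaleR)
    obtain K where K: "\<And>x. norm (l x) \<le> norm x * K" "K > 0" using l.pos_bounded by blast
    obtain L where L: "\<And>x y. norm (B x y) \<le> norm x * norm y * L" "L > 0" using B.pos_bounded by blast
    have "norm (l (B x y)) \<le> norm x * norm y * (L * K)" for x y
    proof -
      have "norm (l (B x y)) \<le> norm (B x y) * K" by (rule K(1))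
      also have "\<dots> \<le> (norm x * norm y * L) * K" by (rule mult_right_mono[OF L(1)]) (use K in simp)
      finally show ?thesis by (simp add: ac_simps)
    qed
    thus "\<exists>K. \<forall>a b. norm (l (B a b)) \<le> norm a * norm b * K" by blast
  qed
qed

lemma PB_equiv:
  fixes B :: "'a::real_normed_vector \<Rightarrow> 'a \<Rightarrow> 'b::banach"
  assumes bb: "bounded_bilinear B" and f: "pt_valid f" and g: "pt_valid g" and e: "pt_equiv f g"
  shows "PB B f = PB B g"
proof (rule ccontr)
  assume "PB B f \<noteq> PB B g"
  hence "PB B f - PB B g \<noteq> 0" by simp
  then obtain l :: "'b \<Rightarrow> real" where l: "bounded_linear l" "l (PB B f - PB B g) \<noteq> 0"
    using hahn_banach_sep by blast
  have bbl: "bounded_bilinear (\<lambda>x y. l (B x y))" by (rule bb_compose[OF l(1) bb])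
  have 1: "l (PB B f) = pt_eval (\<lambda>x y. l (B x y)) f"
    unfolding PB_def pt_eval_def by (rule bounded_linear.suminf[OF l(1) bb_summable[OF bb f]])
  have 2: "l (PB B g) = pt_eval (\<lambda>x y. l (B x y)) g"
    unfolding PB_def pt_eval_def by (rule bounded_linear.suminf[OF l(1) bb_summable[OF bb g]])
  have 3: "pt_eval (\<lambda>x y. l (B x y)) f = pt_eval (\<lambda>x y. l (B x y)) g"
    using e bbl unfolding pt_equiv_def by blast
  have "l (PB B f - PB B g) = l (PB B f) - l (PB B g)" using l(1) by (simp add: linear_diff bounded_linear.linear)
  also have "\<dots> = 0" using 1 2 3 by simp
  finally show False using l(2) by simp
qed

lemma PB_norm:
  fixes B :: "'a::real_normed_vector \<Rightarrow> 'a \<Rightarrow> 'b::banach"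
  assumes bb: "bounded_bilinear B" and nb: "\<And>x y. norm (B x y) \<le> norm x * norm y" and f: "pt_valid f"
  shows "norm (PB B f) \<le> pt_norm f"
proof (rule N_lower_bound[OF f])
  fix g assume g: "pt_valid g" "pt_equiv f g"
  have "PB B f = PB B g" by (rule PB_equiv[OF bb f g(1) g(2)])
  moreover have "norm (PB B g) \<le> nsum g"
  proof -
    have sg: "summable (\<lambda>n. norm (fst (g n)) * norm (snd (g n)))" using g(1) unfolding pt_valid_def .
    have exN: "\<exists>N. \<forall>n\<ge>N. norm (norm (B (fst (g n)) (snd (g n)))) \<le> norm (fst (g n)) * norm (snd (g n))"
      using nb by simp
    have sn: "summable (\<lambda>n. norm (B (fst (g n)) (snd (g n))))"
      by (rule summable_comparison_test[OF exN sg])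
    have "norm (PB B g) \<le> (\<Sum>n. norm (B (fst (g n)) (snd (g n))))"
      unfolding PB_def by (rule summable_norm[OF sn])
    also have "\<dots> \<le> nsum g" unfolding nsum_def by (rule suminf_le[OF nb sn sg])
    finally show ?thesis .
  qed
  ultimately show "norm (PB B f) \<le> nsum g" by simp
qed

lemma PB_add:
  fixes B :: "'a::real_normed_vector \<Rightarrow> 'a \<Rightarrow> 'b::banach"
  assumes bb: "bounded_bilinear B" and "pt_valid f" "pt_valid g"
  shows "PB B (pt_add f g) = PB B f + PB B g"
  using sums_unique[OF add_sums[of "\<lambda>p. B (fst p) (snd p)" f g,
     OF bb_summable[OF bb assms(2)] bb_summable[OF bb assms(3)]]]
  by (simp add: PB_def)

lemma PB_neg:
  fixes B :: "'a::real_normed_vector \<Rightarrow> 'a \<Rightarrow> 'b::banach"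
  assumes bb: "bounded_bilinear B" and f: "pt_valid f"
  shows "PB B (pt_neg f) = - PB B f"
  unfolding PB_def pt_neg_def
  using suminf_minus[OF bb_summable[OF bb f]] by (simp add: bounded_bilinear.minus_left[OF bb])

lemma PB_scale:
  fixes B :: "'a::real_normed_vector \<Rightarrow> 'a \<Rightarrow> 'b::banach"
  assumes bb: "bounded_bilinear B" and f: "pt_valid f"
  shows "PB B (pt_scale c f) = c *\<^sub>R PB B f"
  unfolding PB_def pt_scale_def
  using suminf_scaleR_right[OF bb_summable[OF bb f], of c] by (simp add: bounded_bilinear.scaleR_left[OF bb])

lemma PB_diff:
  fixes B :: "'a::real_normed_vector \<Rightarrow> 'a \<Rightarrow> 'b::banach"
  assumes bb: "bounded_bilinear B" and "pt_valid f" "pt_valid g"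
  shows "PB B (pt_diff f g) = PB B f - PB B g"
  using assms by (simp add: pt_diff_eq PB_add PB_neg valid_neg)

lemma PB_flip: "PB B (pt_flip f) = PB (\<lambda>x y. B y x) f"
  by (simp add: PB_def pt_flip_def)

lemma pi_PB: "pt_pi f = PB (*) f" by (simp add: pt_pi_def PB_def)
lemma pio_PB: "pt_pio f = PB (\<lambda>x y. y * x) f" by (simp add: pt_pio_def PB_def)

lemma bb_mult: "bounded_bilinear ((*) :: 'a \<Rightarrow> 'a \<Rightarrow> 'a::real_normed_algebra)"
  by (rule bounded_bilinear_mult)
lemma bb_multo: "bounded_bilinear (\<lambda>x y. y * (x :: 'a::real_normed_algebra))"
  by (rule bounded_bilinear.flip[OF bounded_bilinear_mult])

lemma PB_lmul:
  fixes f :: "('a::{real_normed_algebra,banach}) ptrep"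
  assumes f: "pt_valid f"
  shows "PB (*) (pt_lmul a f) = a * PB (*) f"
  unfolding PB_def pt_lmul_def
  using suminf_mult[OF bb_summable[OF bb_mult f], of a] by (simp add: mult.assoc)

lemma PB_rmul:
  fixes f :: "('a::{real_normed_algebra,banach}) ptrep"
  assumes f: "pt_valid f"
  shows "PB (*) (pt_rmul f a) = PB (*) f * a"
  unfolding PB_def pt_rmul_def
  using suminf_mult2[OF bb_summable[OF bb_mult f], of a] by (simp add: mult.assoc)

lemma PBo_lcirc:
  fixes f :: "('a::{real_normed_algebra,banach}) ptrep"
  assumes f: "pt_valid f"
  shows "PB (\<lambda>x y. y * x) (pt_lcirc a f) = a * PB (\<lambda>x y. y * x) f"
  unfolding PB_def pt_lcirc_def
  using suminf_mult[OF bb_summable[OF bb_multo f], of a] by (simp add: mult.assoc)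

lemma PBo_rcirc:
  fixes f :: "('a::{real_normed_algebra,banach}) ptrep"
  assumes f: "pt_valid f"
  shows "PB (\<lambda>x y. y * x) (pt_rcirc f a) = PB (\<lambda>x y. y * x) f * a"
  unfolding PB_def pt_rcirc_def
  using suminf_mult2[OF bb_summable[OF bb_multo f], of a] by (simp add: mult.assoc)

lemma norm_mult_o: "norm (y * x) \<le> norm x * norm (y::'a::real_normed_algebra)"
  using norm_mult_ineq[of y x] by (simp add: mult.commute)

lemma lmul_add: "pt_lmul a (pt_add f g) = pt_add (pt_lmul a f) (pt_lmul a g)"
  by (auto simp: fun_eq_iff pt_lmul_def pt_add_def)
lemma rmul_add: "pt_rmul (pt_add f g) a = pt_add (pt_rmul f a) (pt_rmul g a)"
  by (auto simp: fun_eq_iff pt_rmul_def pt_add_def)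
lemma neg_add: "pt_neg (pt_add f g) = pt_add (pt_neg f) (pt_neg g)"
  by (auto simp: fun_eq_iff pt_neg_def pt_add_def)
lemma flip_add: "pt_flip (pt_add f g) = pt_add (pt_flip f) (pt_flip g)"
  by (auto simp: fun_eq_iff pt_flip_def pt_add_def)

lemma flip_diff_equiv:
  "pt_equiv (pt_flip (pt_diff (pt_lcirc a t) (pt_rcirc t a))) (pt_diff (pt_lmul a (pt_flip t)) (pt_rmul (pt_flip t) a))"
  by (rule equiv_termwise) (auto simp: pt_flip_def pt_diff_def pt_lmul_def pt_rmul_def pt_lcirc_def pt_rcirc_def)

lemma N_circ:
  "pt_norm (pt_diff (pt_lcirc a t) (pt_rcirc t a)) = pt_norm (pt_diff (pt_lmul a (pt_flip t)) (pt_rmul (pt_flip t) a))"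
  using N_flip[of "pt_diff (pt_lcirc a t) (pt_rcirc t a)"] N_equiv[OF flip_diff_equiv[of a t]] by simp

lemma scale_diff1:
  "pt_diff (pt_lmul a (pt_scale c t)) (pt_rmul (pt_scale c t) a) = pt_scale c (pt_diff (pt_lmul a t) (pt_rmul t a))"
  by (auto simp: fun_eq_iff pt_diff_def pt_lmul_def pt_rmul_def pt_scale_def)

lemma scale_diff2:
  "pt_diff (pt_lcirc a (pt_scale c t)) (pt_rcirc (pt_scale c t) a) = pt_scale c (pt_diff (pt_lcirc a t) (pt_rcirc t a))"
  by (auto simp: fun_eq_iff pt_diff_def pt_lcirc_def pt_rcirc_def pt_scale_def)

definition symz :: "('a::real_normed_vector) ptrep \<Rightarrow> 'a ptrep" where
  "symz t = pt_add (pt_scale (1/2) t) (pt_flip (pt_scale (1/2) t))"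

lemma valid_symz: "pt_valid t \<Longrightarrow> pt_valid (symz t)"
  by (simp add: symz_def valid_add valid_flip valid_scale)

lemma symmetric_symz: "pt_valid t \<Longrightarrow> pt_symmetric (symz t)"
  unfolding pt_symmetric_def symz_def flip_add flip_flip
  by (rule equiv_add_comm) (simp_all add: valid_flip valid_scale)

lemma N_symz:
  fixes t :: "('a::{real_normed_algebra,banach}) ptrep"
  assumes t: "pt_valid t"
  shows "pt_norm (pt_diff (pt_lmul a (symz t)) (pt_rmul (symz t) a))
     \<le> 1/2 * pt_norm (pt_diff (pt_lmul a t) (pt_rmul t a)) + 1/2 * pt_norm (pt_diff (pt_lcirc a t) (pt_rcirc t a))"
proof -
  define u where "u = pt_scale (1/2) t"
  have u: "pt_valid u" "pt_valid (pt_flip u)" using t by (simp_all add: u_def valid_scale valid_flip)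
  define A where "A = pt_lmul a u"
  define B where "B = pt_lmul a (pt_flip u)"
  define C where "C = pt_neg (pt_rmul u a)"
  define D where "D = pt_neg (pt_rmul (pt_flip u) a)"
  have v: "pt_valid A" "pt_valid B" "pt_valid C" "pt_valid D"
    using u by (simp_all add: A_def B_def C_def D_def valid_lmul valid_rmul valid_neg)
  have "pt_diff (pt_lmul a (symz t)) (pt_rmul (symz t) a) = pt_add (pt_add A B) (pt_add C D)"
    by (simp add: symz_def pt_diff_eq lmul_add rmul_add neg_add A_def B_def C_def D_def u_def)
  hence "pt_norm (pt_diff (pt_lmul a (symz t)) (pt_rmul (symz t) a)) = pt_norm (pt_add (pt_add A C) (pt_add B D))"
    using N_equiv[OF equiv_add4[OF v]] by simp
  also have "\<dots> \<le> pt_norm (pt_add A C) + pt_norm (pt_add B D)"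
    by (rule N_add) (use v in \<open>simp_all add: valid_add\<close>)
  also have "pt_add A C = pt_scale (1/2) (pt_diff (pt_lmul a t) (pt_rmul t a))"
    using scale_diff1[of a "1/2" t] by (simp add: A_def C_def u_def pt_diff_eq)
  also have "pt_add B D = pt_diff (pt_lmul a (pt_flip u)) (pt_rmul (pt_flip u) a)"
    by (simp add: B_def D_def pt_diff_eq)
  also have "pt_norm \<dots> = pt_norm (pt_diff (pt_lcirc a u) (pt_rcirc u a))" by (rule N_circ[symmetric])
  also have "pt_diff (pt_lcirc a u) (pt_rcirc u a) = pt_scale (1/2) (pt_diff (pt_lcirc a t) (pt_rcirc t a))"
    by (simp add: u_def scale_diff2)
  also have "pt_norm (pt_scale (1/2) (pt_diff (pt_lmul a t) (pt_rmul t a))) \<le> 1/2 * pt_norm (pt_diff (pt_lmul a t) (pt_rmul t a))"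
    by (rule N_scale) (simp_all add: t valid_diff valid_lmul valid_rmul)
  also have "pt_norm (pt_scale (1/2) (pt_diff (pt_lcirc a t) (pt_rcirc t a))) \<le> 1/2 * pt_norm (pt_diff (pt_lcirc a t) (pt_rcirc t a))"
    by (rule N_scale) (simp_all add: t valid_diff valid_lcirc valid_rcirc)
  finally show ?thesis by simp
qed

lemma pi_symz:
  fixes t :: "('a::{real_normed_algebra,banach}) ptrep"
  assumes t: "pt_valid t"
  shows "pt_pi (symz t) = (1/2) *\<^sub>R pt_pi t + (1/2) *\<^sub>R pt_pio t"
proof -
  have u: "pt_valid (pt_scale (1/2) t)" "pt_valid (pt_flip (pt_scale (1/2) t))" using t by (simp_all add: valid_scale valid_flip)
  show ?thesis
    unfolding pi_PB pio_PB symz_def PB_add[OF bb_mult u] PB_flip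
    using PB_scale[OF bb_mult t] PB_scale[OF bb_multo t] by simp
qed

lemma pi_D:
  fixes t :: "('a::{real_normed_algebra,banach}) ptrep"
  assumes t: "pt_valid t"
  shows "PB (*) (pt_diff (pt_lmul a t) (pt_rmul t a)) = a * pt_pi t - pt_pi t * a"
  using t by (simp add: PB_diff[OF bb_mult] valid_lmul valid_rmul PB_lmul PB_rmul pi_PB)

lemma pio_D:
  fixes t :: "('a::{real_normed_algebra,banach}) ptrep"
  assumes t: "pt_valid t"
  shows "PB (\<lambda>x y. y * x) (pt_diff (pt_lcirc a t) (pt_rcirc t a)) = a * pt_pio t - pt_pio t * a"
  using t by (simp add: PB_diff[OF bb_multo] valid_lcirc valid_rcirc PBo_lcirc PBo_rcirc pio_PB)

lemma tendsto_PB_zero: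
  fixes B :: "'a::real_normed_vector \<Rightarrow> 'a \<Rightarrow> 'b::banach"
  assumes bb: "bounded_bilinear B" and nb: "\<And>x y. norm (B x y) \<le> norm x * norm y"
    and v: "\<And>i. pt_valid (D i)" and lim: "((\<lambda>i. pt_norm (D i)) \<longlongrightarrow> 0) F"
  shows "((\<lambda>i. PB B (D i)) \<longlongrightarrow> 0) F"
  by (rule Lim_null_comparison[OF _ lim]) (use PB_norm[OF bb nb v] in simp)

theorem proposition3p2:
  shows "symm_pseudo_amenable TYPE('a::{real_normed_algebra,banach}) \<longleftrightarrow>
    (\<exists>(t::'a ptrep \<Rightarrow> 'a ptrep) F. F \<noteq> bot \<and> (\<forall>i. pt_valid (t i)) \<and>
      (\<forall>a. ((\<lambda>i. pt_norm (pt_diff (pt_lmul a (t i)) (pt_rmul (t i) a))) \<longlongrightarrow> 0) F) \<and>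
      (\<forall>a. ((\<lambda>i. pt_pi (t i) * a) \<longlongrightarrow> a) F) \<and>
      (\<forall>a. ((\<lambda>i. pt_norm (pt_diff (pt_lcirc a (t i)) (pt_rcirc (t i) a))) \<longlongrightarrow> 0) F) \<and>
      (\<forall>a. ((\<lambda>i. a * pt_pio (t i)) \<longlongrightarrow> a) F))"
proof
  assume "symm_pseudo_amenable TYPE('a)"
  then obtain t :: "'a ptrep \<Rightarrow> 'a ptrep" and F where ad: "approx_diagonal t F" and sy: "\<forall>i. pt_symmetric (t i)"
    unfolding symm_pseudo_amenable_def by (elim exE conjE)
  have Fb: "F \<noteq> bot" and v: "\<And>i. pt_valid (t i)"
    and c1: "\<And>a. ((\<lambda>i. pt_norm (pt_diff (pt_lmul a (t i)) (pt_rmul (t i) a))) \<longlongrightarrow> 0) F"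
    and c2: "\<And>a. ((\<lambda>i. pt_pi (t i) * a) \<longlongrightarrow> a) F"
    using ad unfolding approx_diagonal_def by simp_all
  have e: "pt_equiv (pt_flip (t i)) (t i)" for i using sy unfolding pt_symmetric_def by simp
  have c3: "((\<lambda>i. pt_norm (pt_diff (pt_lcirc a (t i)) (pt_rcirc (t i) a))) \<longlongrightarrow> 0) F" for a
  proof -
    have "pt_norm (pt_diff (pt_lcirc a (t i)) (pt_rcirc (t i) a)) = pt_norm (pt_diff (pt_lmul a (t i)) (pt_rmul (t i) a))" for i
    proof -
      have "pt_norm (pt_diff (pt_lcirc a (t i)) (pt_rcirc (t i) a)) = pt_norm (pt_diff (pt_lmul a (pt_flip (t i))) (pt_rmul (pt_flip (t i)) a))"
        by (rule N_circ)
      also have "\<dots> = pt_norm (pt_diff (pt_lmul a (t i)) (pt_rmul (t i) a))"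
        unfolding pt_diff_eq
        by (rule N_equiv, rule equiv_add)
           (rule valid_lmul valid_neg valid_rmul valid_flip v equiv_lmul equiv_neg equiv_rmul e)+
      finally show ?thesis .
    qed
    thus ?thesis using c1[of a] by simp
  qed
  have c4: "((\<lambda>i. a * pt_pio (t i)) \<longlongrightarrow> a) F" for a
  proof -
    have pio: "pt_pio (t i) = pt_pi (t i)" for i
    proof -
      have "pt_pio (t i) = PB (*) (pt_flip (t i))" by (simp add: pio_PB PB_flip)
      also have "\<dots> = PB (*) (t i)" by (rule PB_equiv[OF bb_mult valid_flip[OF v] v e])
      finally show ?thesis by (simp add: pi_PB)
    qed
    have "((\<lambda>i. PB (*) (pt_diff (pt_lmul a (t i)) (pt_rmul (t i) a))) \<longlongrightarrow> 0) F"
      by (rule tendsto_PB_zero[OF bb_mult norm_mult_ineq _ c1]) (simp add: v valid_diff valid_lmul valid_rmul)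
    hence "((\<lambda>i. (a * pt_pi (t i) - pt_pi (t i) * a) + pt_pi (t i) * a) \<longlongrightarrow> 0 + a) F"
      by (intro tendsto_add c2) (simp add: pi_D v)
    thus ?thesis by (simp add: pio)
  qed
  show "\<exists>(t::'a ptrep \<Rightarrow> 'a ptrep) F. F \<noteq> bot \<and> (\<forall>i. pt_valid (t i)) \<and>
      (\<forall>a. ((\<lambda>i. pt_norm (pt_diff (pt_lmul a (t i)) (pt_rmul (t i) a))) \<longlongrightarrow> 0) F) \<and>
      (\<forall>a. ((\<lambda>i. pt_pi (t i) * a) \<longlongrightarrow> a) F) \<and>
      (\<forall>a. ((\<lambda>i. pt_norm (pt_diff (pt_lcirc a (t i)) (pt_rcirc (t i) a))) \<longlongrightarrow> 0) F) \<and>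
      (\<forall>a. ((\<lambda>i. a * pt_pio (t i)) \<longlongrightarrow> a) F)"
    using Fb v c1 c2 c3 c4 by (intro exI[of _ t] exI[of _ F] conjI allI)
next
  assume "\<exists>(t::'a ptrep \<Rightarrow> 'a ptrep) F. F \<noteq> bot \<and> (\<forall>i. pt_valid (t i)) \<and>
      (\<forall>a. ((\<lambda>i. pt_norm (pt_diff (pt_lmul a (t i)) (pt_rmul (t i) a))) \<longlongrightarrow> 0) F) \<and>
      (\<forall>a. ((\<lambda>i. pt_pi (t i) * a) \<longlongrightarrow> a) F) \<and>
      (\<forall>a. ((\<lambda>i. pt_norm (pt_diff (pt_lcirc a (t i)) (pt_rcirc (t i) a))) \<longlongrightarrow> 0) F) \<and>
      (\<forall>a. ((\<lambda>i. a * pt_pio (t i)) \<longlongrightarrow> a) F)"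
  then obtain t :: "'a ptrep \<Rightarrow> 'a ptrep" and F where Fb: "F \<noteq> bot" and v: "\<And>i. pt_valid (t i)"
    and c1: "\<And>a. ((\<lambda>i. pt_norm (pt_diff (pt_lmul a (t i)) (pt_rmul (t i) a))) \<longlongrightarrow> 0) F"
    and c2: "\<And>a. ((\<lambda>i. pt_pi (t i) * a) \<longlongrightarrow> a) F"
    and c3: "\<And>a. ((\<lambda>i. pt_norm (pt_diff (pt_lcirc a (t i)) (pt_rcirc (t i) a))) \<longlongrightarrow> 0) F"
    and c4: "\<And>a. ((\<lambda>i. a * pt_pio (t i)) \<longlongrightarrow> a) F"
    by blast
  define s where "s i = symz (t i)" for i
  have sv: "\<And>i. pt_valid (s i)" by (simp add: s_def valid_symz v)
  have ssym: "\<forall>i. pt_symmetric (s i)" by (simp add: s_def symmetric_symz v)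
  have d1: "((\<lambda>i. pt_norm (pt_diff (pt_lmul a (s i)) (pt_rmul (s i) a))) \<longlongrightarrow> 0) F" for a
  proof (rule tendsto_sandwich[of "\<lambda>i. 0" _ F "\<lambda>i. 1/2 * pt_norm (pt_diff (pt_lmul a (t i)) (pt_rmul (t i) a)) + 1/2 * pt_norm (pt_diff (pt_lcirc a (t i)) (pt_rcirc (t i) a))"])
    show "\<forall>\<^sub>F i in F. 0 \<le> pt_norm (pt_diff (pt_lmul a (s i)) (pt_rmul (s i) a))"
      by (simp add: N_nonneg sv valid_diff valid_lmul valid_rmul)
    show "\<forall>\<^sub>F i in F. pt_norm (pt_diff (pt_lmul a (s i)) (pt_rmul (s i) a)) \<le> 1/2 * pt_norm (pt_diff (pt_lmul a (t i)) (pt_rmul (t i) a)) + 1/2 * pt_norm (pt_diff (pt_lcirc a (t i)) (pt_rcirc (t i) a))"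
      unfolding s_def by (rule always_eventually, rule allI, rule N_symz[OF v])
    show "((\<lambda>i. 0::real) \<longlongrightarrow> 0) F" by simp
    have "((\<lambda>i. 1/2 * pt_norm (pt_diff (pt_lmul a (t i)) (pt_rmul (t i) a)) + 1/2 * pt_norm (pt_diff (pt_lcirc a (t i)) (pt_rcirc (t i) a))) \<longlongrightarrow> 1/2 * 0 + 1/2 * 0) F"
      by (intro tendsto_intros c1 c3)
    thus "((\<lambda>i. 1/2 * pt_norm (pt_diff (pt_lmul a (t i)) (pt_rmul (t i) a)) + 1/2 * pt_norm (pt_diff (pt_lcirc a (t i)) (pt_rcirc (t i) a))) \<longlongrightarrow> 0) F"
      by simp
  qed
  have d2: "((\<lambda>i. pt_pi (s i) * a) \<longlongrightarrow> a) F" for a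
  proof -
    have "((\<lambda>i. PB (\<lambda>x y. y * x) (pt_diff (pt_lcirc a (t i)) (pt_rcirc (t i) a))) \<longlongrightarrow> 0) F"
      by (rule tendsto_PB_zero[OF bb_multo norm_mult_o _ c3]) (simp add: v valid_diff valid_lcirc valid_rcirc)
    hence "((\<lambda>i. a * pt_pio (t i) - (a * pt_pio (t i) - pt_pio (t i) * a)) \<longlongrightarrow> a - 0) F"
      by (intro tendsto_diff c4) (simp add: pio_D v)
    hence o: "((\<lambda>i. pt_pio (t i) * a) \<longlongrightarrow> a) F" by simp
    have "((\<lambda>i. (1/2) *\<^sub>R (pt_pi (t i) * a) + (1/2) *\<^sub>R (pt_pio (t i) * a)) \<longlongrightarrow> (1/2) *\<^sub>R a + (1/2) *\<^sub>R a) F"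
      by (intro tendsto_intros c2 o)
    moreover have "(1/2) *\<^sub>R a + (1/2) *\<^sub>R a = a" by (simp add: scaleR_left_distrib[symmetric])
    moreover have "pt_pi (s i) * a = (1/2) *\<^sub>R (pt_pi (t i) * a) + (1/2) *\<^sub>R (pt_pio (t i) * a)" for i
      by (simp add: s_def pi_symz v distrib_right)
    ultimately show ?thesis by simp
  qed
  have "approx_diagonal s F" unfolding approx_diagonal_def using Fb sv d1 d2 by (intro conjI allI)
  thus "symm_pseudo_amenable TYPE('a)" unfolding symm_pseudo_amenable_def using ssym by blast
qed

end
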